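(* Let $\beta,\psi_0,M$ be real constants, $\kappa>0$, $p\in\mathbb{R}\setminus\{0,-\tfrac12\}$, and let $I\subset(0,\infty)$ be an open interval on which $f(r):=\frac{1}{2p+1}-2Mr^{-2p-1}>0$. Set $\tilde{\mathcal{C}}\equiv0$, $\mathcal{V}\equiv0$, $\mathcal{A}(\psi)=-\frac{p\beta}{4}\psi^2$, and $$A(r)=\sqrt{f(r)},\qquad C(r)=1,\qquad \psi(r)=\psi_0r^p .$$ Then $E^{(2)}_{tt}=E^{(2)}_{rr}=E^{(2)}_{\vartheta\vartheta}=E^{(2)}_{\psi}=0$ hold on $I$, i.e. the metric ${\rm d}s^2=f\,{\rm d}t^2-f^{-1}{\rm d}r^2-r^2{\rm d}\Omega^2$ with this scalar field solves the complex-tetrad vacuum field equations.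
   Context: Metric ansatz ${\rm d}s^2=A(r)^2{\rm d}t^2-\frac{C(r)^2}{A(r)^2}{\rm d}r^2-r^2{\rm d}\Omega^2$, scalar field $\psi=\psi(r)$. Primes on $A,C,\psi$ are $r$-derivatives; $\mathcal{A}',\tilde{\mathcal{C}}',\tilde{\mathcal{C}}'',\mathcal{V}'$ are $\psi$-derivatives evaluated at $\psi(r)$. The complex-tetrad reduced vacuum field equations of the scalar-torsion theory are: $E^{(2)}_{tt}:\ 0=\mathcal{A}\frac{A^2(-2rACA'-A^2(C-2rC')+C^3)}{r^2C^3}+\tilde{\mathcal{C}}'\frac{A^3(C(A'\psi'+A\psi'')-AC'\psi')}{C^3}-\frac{2A^4\psi'\mathcal{A}'}{rC^2}+\frac{A^4\psi'^2\tilde{\mathcal{C}}''}{C^2}-\frac{\beta A^4\psi'^2}{2C^2}+\kappa^2A^2\mathcal{V}$; $E^{(2)}_{rr}:\ 0=\frac{\mathcal{A}(-2rAA'-A^2+C^2)}{r^2A^2}+\big(\frac{A'}{A}+\frac2r\big)\psi'\tilde{\mathcal{C}}'+\frac{\kappa^2C^2\mathcal{V}}{A^2}+\frac12\beta\psi'^2$; $E^{(2)}_{\vartheta\vartheta}:\ 0=-\mathcal{A}'\frac{A(rA'+A)\psi'}{rC^2}+\tilde{\mathcal{C}}'\frac{A(C(A'\psi'+A\psi'')-AC'\psi')}{C^3}+\frac{\mathcal{A}(-rCA'^2+A(rA'C'-C(rA''+2A'))+A^2C')}{rC^3}+\frac{A^2\psi'^2\tilde{\mathcal{C}}''}{C^2}-\frac{\beta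 A^2\psi'^2}{2C^2}+\kappa^2\mathcal{V}$; $E^{(2)}_{\psi}:\ 0=\frac{(2rAA'+A^2+C^2)\mathcal{A}'}{r^2C^2}+\frac{\beta A(2rCA'\psi'+A(C(r\psi''+2\psi')-rC'\psi'))}{rC^3}+\frac{\tilde{\mathcal{C}}'(r^2CA'^2+rA(C(rA''+6A')-rA'C')+2A^2(C-rC'))}{r^2C^3}+\kappa^2\mathcal{V}'$. *)

theory Defs
  imports "HOL-Analysis.Analysis"
begin

text \<open>Reduced complex-tetrad vacuum field equations. Arguments:
  coupling functions AA (= calligraphic A), Ct (= tilde C), V of psi;
  constants beta, kappa; metric functions A, C and scalar field psi of r; the point r.\<close>

definition E_tt :: "(real \<Rightarrow> real) \<Rightarrow> (real \<Rightarrow> real) \<Rightarrow> (real \<Rightarrow> real) \<Rightarrow> real \<Rightarrow> real \<Rightarrow>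
    (real \<Rightarrow> real) \<Rightarrow> (real \<Rightarrow> real) \<Rightarrow> (real \<Rightarrow> real) \<Rightarrow> real \<Rightarrow> real" where
  "E_tt AA Ct V \<beta> \<kappa> A C \<psi> r =
    (let a = A r; a1 = deriv A r; c = C r; c1 = deriv C r;
         p1 = deriv \<psi> r; p2 = deriv (deriv \<psi>) r; s = \<psi> r in
     AA s * (a^2 * (-2*r*a*c*a1 - a^2*(c - 2*r*c1) + c^3)) / (r^2 * c^3)
     + deriv Ct s * (a^3 * (c*(a1*p1 + a*p2) - a*c1*p1)) / c^3
     - 2 * a^4 * p1 * deriv AA s / (r * c^2)
     + a^4 * p1^2 * deriv (deriv Ct) s / c^2
     - \<beta> * a^4 * p1^2 / (2 * c^2)
     + \<kappa>^2 * a^2 * V s)"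

definition E_rr :: "(real \<Rightarrow> real) \<Rightarrow> (real \<Rightarrow> real) \<Rightarrow> (real \<Rightarrow> real) \<Rightarrow> real \<Rightarrow> real \<Rightarrow>
    (real \<Rightarrow> real) \<Rightarrow> (real \<Rightarrow> real) \<Rightarrow> (real \<Rightarrow> real) \<Rightarrow> real \<Rightarrow> real" where
  "E_rr AA Ct V \<beta> \<kappa> A C \<psi> r =
    (let a = A r; a1 = deriv A r; c = C r;
         p1 = deriv \<psi> r; s = \<psi> r in
     AA s * (-2*r*a*a1 - a^2 + c^2) / (r^2 * a^2)
     + (a1 / a + 2 / r) * p1 * deriv Ct s
     + \<kappa>^2 * c^2 * V s / a^2
     + 1/2 * \<beta> * p1^2)"

definition E_thth :: "(real \<Rightarrow> real) \<Rightarrow> (real \<Rightarrow> real) \<Rightarrow> (real \<Rightarrow> real) \<Rightarrow> real \<Rightarrow> real \<Rightarrow>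
    (real \<Rightarrow> real) \<Rightarrow> (real \<Rightarrow> real) \<Rightarrow> (real \<Rightarrow> real) \<Rightarrow> real \<Rightarrow> real" where
  "E_thth AA Ct V \<beta> \<kappa> A C \<psi> r =
    (let a = A r; a1 = deriv A r; a2 = deriv (deriv A) r; c = C r; c1 = deriv C r;
         p1 = deriv \<psi> r; p2 = deriv (deriv \<psi>) r; s = \<psi> r in
     - deriv AA s * (a * (r*a1 + a) * p1) / (r * c^2)
     + deriv Ct s * (a * (c*(a1*p1 + a*p2) - a*c1*p1)) / c^3
     + AA s * (-r*c*a1^2 + a*(r*a1*c1 - c*(r*a2 + 2*a1)) + a^2*c1) / (r * c^3)
     + a^2 * p1^2 * deriv (deriv Ct) s / c^2
     - \<beta> * a^2 * p1^2 / (2 * c^2)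
     + \<kappa>^2 * V s)"

definition E_psi :: "(real \<Rightarrow> real) \<Rightarrow> (real \<Rightarrow> real) \<Rightarrow> (real \<Rightarrow> real) \<Rightarrow> real \<Rightarrow> real \<Rightarrow>
    (real \<Rightarrow> real) \<Rightarrow> (real \<Rightarrow> real) \<Rightarrow> (real \<Rightarrow> real) \<Rightarrow> real \<Rightarrow> real" where
  "E_psi AA Ct V \<beta> \<kappa> A C \<psi> r =
    (let a = A r; a1 = deriv A r; a2 = deriv (deriv A) r; c = C r; c1 = deriv C r;
         p1 = deriv \<psi> r; p2 = deriv (deriv \<psi>) r; s = \<psi> r in
     (2*r*a*a1 + a^2 + c^2) * deriv AA s / (r^2 * c^2)
     + \<beta> * a * (2*r*c*a1*p1 + a*(c*(r*p2 + 2*p1) - r*c1*p1)) / (r * c^3)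
     + deriv Ct s * (r^2*c*a1^2 + r*a*(c*(r*a2 + 6*a1) - r*a1*c1) + 2*a^2*(c - r*c1))
         / (r^2 * c^3)
     + \<kappa>^2 * deriv V s)"

end

theory Submission
  imports Defs
begin

lemma dA: fixes p M r :: real assumes "r>0" "1/(2*p+1) - 2*M * r powr (-2*p-1) > 0"
  shows "((\<lambda>t. sqrt (1/(2*p+1) - 2*M * t powr (-2*p-1))) has_real_derivative
     (-2*M*((-2*p-1)* r powr (-2*p-1-1))) * (inverse (sqrt (1/(2*p+1) - 2*M * r powr (-2*p-1))) / 2)) (at r)"
  using assms
  by (intro derivative_eq_intros) (rule refl | simp)+

lemma gen: fixes g h :: "real \<Rightarrow> real"
  assumes "(g has_real_derivative g') (at r)" "(h has_real_derivative h') (at r)" "h r > 0"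
  shows "((\<lambda>t. g t * (inverse (sqrt (h t)) / 2)) has_real_derivative
     g' * (inverse (sqrt (h r)) / 2) - g r * h' / (4 * sqrt (h r) ^ 3)) (at r)"
proof -
  have s: "sqrt (h r) \<noteq> 0" using assms by simp
  show ?thesis
  using assms s
  apply (intro derivative_eq_intros) 
  apply (rule refl assms | simp)+
  apply (simp add: power3_eq_cube divide_inverse mult_ac)
  apply (simp add: inverse_mult_distrib[symmetric])
  done
qed


lemma dA1: fixes p M r :: real assumes "r>0" "1/(2*p+1) - 2*M * r powr (-2*p-1) > 0"
  shows "((\<lambda>t. (-2*M*((-2*p-1)* t powr (-2*p-1-1))) * (inverse (sqrt (1/(2*p+1) - 2*M * t powr (-2*p-1))) / 2)) has_real_derivative
     (-2*M*((-2*p-1)*((-2*p-1-1)* r powr (-2*p-1-1-1)))) * (inverse (sqrt (1/(2*p+1) - 2*M * r powr (-2*p-1))) / 2)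
     - (-2*M*((-2*p-1)* r powr (-2*p-1-1))) * (-2*M*((-2*p-1)* r powr (-2*p-1-1))) / (4 * sqrt (1/(2*p+1) - 2*M * r powr (-2*p-1)) ^ 3)) (at r)"
proof (rule gen[where h="\<lambda>t. 1/(2*p+1) - 2*M * t powr (-2*p-1)", OF _ _ assms(2)])
  show "((\<lambda>t. - 2 * M * ((- 2 * p - 1) * t powr (- 2 * p - 1 - 1))) has_real_derivative
    - 2 * M * ((- 2 * p - 1) * ((- 2 * p - 1 - 1) * r powr (- 2 * p - 1 - 1 - 1)))) (at r)"
    using assms by (intro derivative_eq_intros) (rule refl | simp)+
  show "((\<lambda>t. 1 / (2 * p + 1) - 2 * M * t powr (- 2 * p - 1)) has_real_derivative
    - 2 * M * ((- 2 * p - 1) * r powr (- 2 * p - 1 - 1))) (at r)"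
    using assms by (intro derivative_eq_intros) (rule refl | simp)+
qed

theorem mainTheorem7:
  fixes \<beta> \<psi>\<^sub>0 M \<kappa> p :: real and I :: "real set"
  assumes "\<kappa> > 0" and "p \<noteq> 0" and "p \<noteq> -1/2"
    and "open I" and "is_interval I" and "I \<noteq> {}" and "I \<subseteq> {0<..}"
    and "\<forall>r\<in>I. 1/(2*p+1) - 2*M * r powr (-2*p-1) > 0"
  shows "\<forall>r\<in>I.
    (let f = (\<lambda>r. 1/(2*p+1) - 2*M * r powr (-2*p-1));
         A = (\<lambda>r. sqrt (f r)); C = (\<lambda>r. 1::real); \<psi> = (\<lambda>r. \<psi>\<^sub>0 * r powr p);
         AA = (\<lambda>s. - p*\<beta>/4 * s^2); Ct = (\<lambda>s. 0::real); V = (\<lambda>s. 0::real) in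
     E_tt AA Ct V \<beta> \<kappa> A C \<psi> r = 0 \<and> E_rr AA Ct V \<beta> \<kappa> A C \<psi> r = 0 \<and>
     E_thth AA Ct V \<beta> \<kappa> A C \<psi> r = 0 \<and> E_psi AA Ct V \<beta> \<kappa> A C \<psi> r = 0)"
proof
  fix r assume rI: "r \<in> I"
  have r0: "r > 0" using rI assms(7) by auto
  have fpos: "1/(2*p+1) - 2*M * r powr (-2*p-1) > 0" using rI assms(8) by auto
  define A1 where "A1 = (\<lambda>t. (-2*M*((-2*p-1)* t powr (-2*p-1-1))) * (inverse (sqrt (1/(2*p+1) - 2*M * t powr (-2*p-1))) / 2))"
  have evA: "eventually (\<lambda>t. deriv (\<lambda>t. sqrt (1/(2*p+1) - 2*M * t powr (-2*p-1))) t = A1 t) (nhds r)"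
  proof -
    have "eventually (\<lambda>t. t \<in> I) (nhds r)" using eventually_nhds_in_open[OF assms(4) rI] .
    then show ?thesis
    proof (rule eventually_mono)
      fix t assume "t \<in> I"
      then have "t > 0" "1/(2*p+1) - 2*M * t powr (-2*p-1) > 0" using assms(7,8) by auto
      then show "deriv (\<lambda>t. sqrt (1/(2*p+1) - 2*M * t powr (-2*p-1))) t = A1 t"
        unfolding A1_def by (rule DERIV_imp_deriv[OF dA])
    qed
  qed
  have dA_r: "deriv (\<lambda>t. sqrt (1/(2*p+1) - 2*M * t powr (-2*p-1))) r = A1 r"
    using evA eventually_nhds_x_imp_x by blast
  have dA2_r: "deriv (deriv (\<lambda>t. sqrt (1/(2*p+1) - 2*M * t powr (-2*p-1)))) r =
     (-2*M*((-2*p-1)*((-2*p-1-1)* r powr (-2*p-1-1-1)))) * (inverse (sqrt (1/(2*p+1) - 2*M * r powr (-2*p-1))) / 2)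
     - (-2*M*((-2*p-1)* r powr (-2*p-1-1))) * (-2*M*((-2*p-1)* r powr (-2*p-1-1))) / (4 * sqrt (1/(2*p+1) - 2*M * r powr (-2*p-1)) ^ 3)"
    apply (subst deriv_cong_ev[OF evA refl])
    unfolding A1_def by (rule DERIV_imp_deriv[OF dA1[OF r0 fpos]])
  have dpsi: "deriv (\<lambda>t. \<psi>\<^sub>0 * t powr p) t = \<psi>\<^sub>0 * (p * t powr (p-1))" if "t > 0" for t
    using that by (intro DERIV_imp_deriv derivative_eq_intros) (rule refl | simp)+
  have evpsi: "eventually (\<lambda>t. deriv (\<lambda>t. \<psi>\<^sub>0 * t powr p) t = \<psi>\<^sub>0 * (p * t powr (p-1))) (nhds r)"
    using eventually_nhds_in_open[of "{0<..}" r] r0 dpsi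
    by (auto elim!: eventually_mono)
  have dpsi_r: "deriv (\<lambda>t. \<psi>\<^sub>0 * t powr p) r = \<psi>\<^sub>0 * (p * r powr (p-1))" using dpsi r0 by blast
  have dpsi2_r: "deriv (deriv (\<lambda>t. \<psi>\<^sub>0 * t powr p)) r = \<psi>\<^sub>0 * (p * ((p-1) * r powr (p-1-1)))"
    apply (subst deriv_cong_ev[OF evpsi refl])
    using r0 by (intro DERIV_imp_deriv derivative_eq_intros) (rule refl | simp)+
  have dAA: "deriv (\<lambda>z. - p*\<beta>/4 * z^2) w = - p*\<beta>/4 * (2*w)" for w
    by (intro DERIV_imp_deriv derivative_eq_intros) (rule refl | simp)+
  define y where "y = r powr (-2*p-1)"
  define x where "x = r powr p"
  define a where "a = sqrt (1/(2*p+1) - 2*M * y)"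
  define c0 where "c0 = 1/(2*p+1)"
  have c0: "c0 * (2*p+1) = 1" unfolding c0_def using assms(3) by (simp add: field_simps)
  have a0: "a > 0" unfolding a_def y_def using fpos by simp
  have a2: "a^2 = c0 - 2*M*y" unfolding a_def c0_def y_def using fpos by simp
  have a3: "sqrt (1/(2*p+1) - 2*M * y) ^ 3 = a^3" unfolding a_def ..
  have p1: "r powr (-2*p-1-1) = y / r" unfolding y_def using r0 by (simp only: powr_diff powr_one)
  have p2: "r powr (-2*p-1-1-1) = y / r^2"
  proof -
    have "r powr (-2*p-1-1-1) = r powr ((-2*p-1) - real 2)" by simp
    also have "\<dots> = y / r^2" unfolding y_def using r0 by (simp only: powr_diff powr_realpow)
    finally show ?thesis .
  qed
  have p3: "r powr (p-1) = x / r" unfolding x_def using r0 by (simp only: powr_diff powr_one)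
  have p4: "r powr (p-1-1) = x / r^2"
  proof -
    have "r powr (p-1-1) = r powr (p - real 2)" by simp
    also have "\<dots> = x / r^2" unfolding x_def using r0 by (simp only: powr_diff powr_realpow)
    finally show ?thesis .
  qed
  have rn: "r \<noteq> 0" using r0 by simp
  have an: "a \<noteq> 0" using a0 by simp
  show "let f = (\<lambda>r. 1/(2*p+1) - 2*M * r powr (-2*p-1));
         A = (\<lambda>r. sqrt (f r)); C = (\<lambda>r. 1::real); \<psi> = (\<lambda>r. \<psi>\<^sub>0 * r powr p);
         AA = (\<lambda>s. - p*\<beta>/4 * s^2); Ct = (\<lambda>s. 0::real); V = (\<lambda>s. 0::real) in
     E_tt AA Ct V \<beta> \<kappa> A C \<psi> r = 0 \<and> E_rr AA Ct V \<beta> \<kappa> A C \<psi> r = 0 \<and>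
     E_thth AA Ct V \<beta> \<kappa> A C \<psi> r = 0 \<and> E_psi AA Ct V \<beta> \<kappa> A C \<psi> r = 0"
    unfolding Let_def E_tt_def E_rr_def E_thth_def E_psi_def
    unfolding dA_r dA2_r dpsi_r dpsi2_r dAA A1_def deriv_const
    unfolding p1 p2 p3 p4 y_def[symmetric] x_def[symmetric] a_def[symmetric] a3
    using rn an a2 c0 
    apply (simp add: field_simps)
    apply (intro conjI) by algebra+
qed
end
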